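(* Fix a noise variance $\sigma_W^2>0$ and let $\lambda_\gamma(0,1)$ be the Gittins index (defined in the context) of an arm with standard normal prior $N(0,1)$. Then \[ \lambda_\gamma(0,1)\ge \sqrt{2\log\left(\frac{1}{1-\gamma}\right)}+o(1)\quad\text{as } \gamma\to1. \]
   Context: One-armed Gaussian bandit: the arm has unknown quality $\theta\sim N(\mu,\sigma^2)$ (the prior), and conditional on $\theta$ the rewards $R_0,R_1,R_2,\ldots$ are i.i.d. $N(\theta,\sigma_W^2)$, where $\sigma_W^2>0$ is a fixed noise variance. Let $\mathcal{H}_t$ be the $\sigma$-algebra generated by $R_0,\ldots,R_{t-1}$ ($\mathcal{H}_0$ trivial). For a discount factor $\gamma\in(0,1)$ and a tax $\lambda\in\mathbb{R}$, define \[ V_\gamma^\lambda(\mu,\sigma)=\sup_{\tau\ge 1}\mathbb{E}\Big[\sum_{t=0}^{\tau}\gamma^t(\theta-\lambda)\Big], \] where the supremum is over stopping times $\tau\ge 1$ (possibly infinite) with respect to the filtration $(\mathcal{H}_t)_{t\ge0}$, and the expectation is under the model with prior $N(\mu,\sigma^2)$. The Gittins index is $\lambda_\gamma(\mu,\sigma^2)=\sup\{\lambda\in\mathbb{R} : V_\gamma^\lambda(\mu,\sigma)\ge 0\}$. Here $\mu=0$, $\sigma^2=1$. *)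

theory Defs
  imports "HOL-Probability.Probability"
begin

text \<open>A sample point is a pair
  (theta, eps) where theta ~ N(mu, sig^2) is the arm quality and eps_0, eps_1, ... are
  i.i.d. standard normal noise variables independent of theta.  The rewards are
  R_t = theta + sW * eps_t, so that conditional on theta they are i.i.d. N(theta, sW^2).
  Here sig and sW are standard deviations (sig^2 = prior variance, sW^2 = noise variance).\<close>

definition noise_space :: "(nat \<Rightarrow> real) measure" where
  "noise_space = (\<Pi>\<^sub>M i\<in>(UNIV::nat set). density lborel std_normal_density)"

definition bandit_space :: "real \<Rightarrow> real \<Rightarrow> (real \<times> (nat \<Rightarrow> real)) measure" where
  "bandit_space mu sig = density lborel (normal_density mu sig) \<Otimes>\<^sub>M noise_space"

definition arm_quality :: "real \<times> (nat \<Rightarrow> real) \<Rightarrow> real" where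
  "arm_quality \<omega> = fst \<omega>"

definition reward :: "real \<Rightarrow> nat \<Rightarrow> real \<times> (nat \<Rightarrow> real) \<Rightarrow> real" where
  "reward sW t \<omega> = fst \<omega> + sW * snd \<omega> t"

definition history :: "real \<Rightarrow> real \<Rightarrow> real \<Rightarrow> nat \<Rightarrow> (real \<times> (nat \<Rightarrow> real)) measure" where
  "history mu sig sW t =
     vimage_algebra (space (bandit_space mu sig))
       (\<lambda>\<omega>. \<lambda>i\<in>{..<t}. reward sW i \<omega>) (\<Pi>\<^sub>M i\<in>{..<t}. (borel :: real measure))"

definition admissible_stop :: "real \<Rightarrow> real \<Rightarrow> real \<Rightarrow> (real \<times> (nat \<Rightarrow> real) \<Rightarrow> enat) \<Rightarrow> bool" where
  "admissible_stop mu sig sW \<tau> \<longleftrightarrow>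
     (\<forall>\<omega>\<in>space (bandit_space mu sig). 1 \<le> \<tau> \<omega>) \<and>
     (\<forall>t::nat. {\<omega>\<in>space (bandit_space mu sig). \<tau> \<omega> \<le> enat t} \<in> sets (history mu sig sW t))"

definition gittins_value :: "real \<Rightarrow> real \<Rightarrow> real \<Rightarrow> real \<Rightarrow> real \<Rightarrow> real" where
  "gittins_value mu sig sW \<gamma> lam =
     (SUP \<tau>\<in>{\<tau>. admissible_stop mu sig sW \<tau>}.
        integral\<^sup>L (bandit_space mu sig)
          (\<lambda>\<omega>. \<Sum>t. if enat t \<le> \<tau> \<omega> then \<gamma> ^ t * (arm_quality \<omega> - lam) else 0))"

definition gittins_index :: "real \<Rightarrow> real \<Rightarrow> real \<Rightarrow> real \<Rightarrow> real" where
  "gittins_index mu sig sW \<gamma> = Sup {lam. gittins_value mu sig sW \<gamma> lam \<ge> 0}"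

end

theory Submission
  imports Defs "HOL-Real_Asymp.Real_Asymp"
begin


abbreviation NN :: "real measure" where "NN \<equiv> density lborel (normal_density 0 1)"

lemma prob_NN: "prob_space NN"
  using prob_space_normal_density[of 1 0] by simp

lemma prob_noise: "prob_space noise_space"
  unfolding noise_space_def by (rule prob_space_PiM) (rule prob_NN)

lemma pps: "pair_prob_space NN noise_space"
proof -
  interpret A: prob_space NN by (rule prob_NN)
  interpret B: prob_space noise_space by (rule prob_noise)
  show ?thesis by unfold_locales
qed

lemma BS_eq: "bandit_space 0 1 = NN \<Otimes>\<^sub>M noise_space"
  unfolding bandit_space_def by simp

lemma space_noise: "space noise_space = UNIV"
  unfolding noise_space_def by (simp add: space_PiM)

lemma space_BS: "space (bandit_space 0 1) = UNIV"
  unfolding BS_eq by (simp add: space_pair_measure space_noise)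

lemma sets_noise: "sets noise_space = sets (\<Pi>\<^sub>M i\<in>(UNIV::nat set). (borel::real measure))"
  unfolding noise_space_def by (intro sets_PiM_cong) auto

lemma sets_BS: "sets (bandit_space 0 1) = sets ((borel::real measure) \<Otimes>\<^sub>M (\<Pi>\<^sub>M i\<in>(UNIV::nat set). (borel::real measure)))"
  unfolding BS_eq by (intro sets_pair_measure_cong) (auto simp: sets_noise)

lemma meas_BS_cong: "measurable (bandit_space 0 1) M = measurable ((borel::real measure) \<Otimes>\<^sub>M (\<Pi>\<^sub>M i\<in>(UNIV::nat set). (borel::real measure))) M"
  by (rule measurable_cong_sets[OF sets_BS refl])

lemma meas_noise_cong: "measurable noise_space M = measurable (\<Pi>\<^sub>M i\<in>(UNIV::nat set). (borel::real measure)) M"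
  by (rule measurable_cong_sets[OF sets_noise refl])

lemma reward_meas[measurable]: "reward sW i \<in> borel_measurable (bandit_space 0 1)"
  unfolding meas_BS_cong reward_def by measurable

lemma coord_distributed:
  "distributed noise_space lborel (\<lambda>x. x i) (normal_density 0 1)"
proof -
  have "distr noise_space lborel (\<lambda>x. x i) = distr noise_space NN (\<lambda>x. x i)"
    by (rule distr_cong) auto
  also have "\<dots> = NN"
    unfolding noise_space_def by (rule distr_PiM_component) (auto intro: prob_NN)
  finally show ?thesis unfolding distributed_def
    by (auto simp: meas_noise_cong)
qed

lemma coord_indep:
  assumes "I \<noteq> {}" "finite I"
  shows "prob_space.indep_vars noise_space (\<lambda>i. borel) (\<lambda>i x. x i) I"
proof -
  interpret P: product_prob_space "\<lambda>_::nat. NN" UNIV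
    by (simp add: product_prob_space_def product_prob_space_axioms_def product_sigma_finite_def
        prob_NN prob_space_imp_sigma_finite)
  interpret prob_space noise_space by (rule prob_noise)
  have "distr noise_space (\<Pi>\<^sub>M i\<in>I. borel) (\<lambda>x. \<lambda>i\<in>I. x i) = distr noise_space (\<Pi>\<^sub>M i\<in>I. NN) (\<lambda>x. restrict x I)"
    by (rule distr_cong) (auto intro!: sets_PiM_cong)
  also have "\<dots> = (\<Pi>\<^sub>M i\<in>I. NN)"
    unfolding noise_space_def using assms by (intro P.distr_PiM_restrict_finite) auto
  also have "\<dots> = (\<Pi>\<^sub>M i\<in>I. distr noise_space borel (\<lambda>x. x i))"
  proof (rule PiM_cong[OF refl])
    fix i assume "i \<in> I"
    have "distr noise_space borel (\<lambda>x. x i) = distr noise_space lborel (\<lambda>x. x i)"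
      by (rule distr_cong) auto
    also have "\<dots> = NN" using coord_distributed[of i] unfolding distributed_def by auto
    finally show "NN = distr noise_space borel (\<lambda>x. x i)" by simp
  qed
  finally show ?thesis
    using assms by (subst indep_vars_iff_distr_eq_PiM) (auto simp: meas_noise_cong)
qed

lemma sum_distributed:
  assumes "n > 0"
  shows "distributed noise_space lborel (\<lambda>x. \<Sum>i<n. x i) (normal_density 0 (sqrt n))"
proof -
  interpret prob_space noise_space by (rule prob_noise)
  have "distributed noise_space lborel (\<lambda>x. \<Sum>i\<in>{..<n}. x i)
     (normal_density (\<Sum>i\<in>{..<n}. 0) (sqrt (\<Sum>i\<in>{..<n}. 1\<^sup>2)))"
    using assms
    by (intro sum_indep_normal[where X="\<lambda>i x. x i"] coord_indep coord_distributed) auto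
  then show ?thesis by simp
qed



lemma nd_split:
  assumes "\<sigma> > 0"
  shows "normal_density 0 \<sigma> z = sqrt 2 * exp (- z\<^sup>2 / (4 * \<sigma>\<^sup>2)) * normal_density 0 (sqrt 2 * \<sigma>) z"
proof -
  have s: "sqrt (2 * pi * (sqrt 2 * \<sigma>)\<^sup>2) = sqrt 2 * sqrt (2 * pi * \<sigma>\<^sup>2)"
    by (simp add: power_mult_distrib real_sqrt_mult[symmetric] algebra_simps)
  have e0: "- (z\<^sup>2 / (2 * \<sigma>\<^sup>2)) = - (z\<^sup>2 / (4 * \<sigma>\<^sup>2)) + - (z\<^sup>2 / (4 * \<sigma>\<^sup>2))"
    using assms by (simp add: field_simps)
  have e: "exp (- (z\<^sup>2 / (2 * \<sigma>\<^sup>2))) = exp (- (z\<^sup>2 / (4 * \<sigma>\<^sup>2))) * exp (- (z\<^sup>2 / (4 * \<sigma>\<^sup>2)))"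
    by (subst e0) (rule exp_add)
  have "sqrt 2 > 0" "sqrt (2 * pi * \<sigma>\<^sup>2) > 0" using assms by auto
  then show ?thesis unfolding normal_density_def s
    by (simp add: e power_mult_distrib field_simps)
qed

lemma normal_tail:
  assumes M: "prob_space M" and D: "distributed M lborel X (normal_density 0 \<sigma>)"
    and s: "\<sigma> > 0" and a: "a \<ge> 0"
  shows "measure M {x\<in>space M. a \<le> \<bar>X x\<bar>} \<le> sqrt 2 * exp (- a\<^sup>2 / (4 * \<sigma>\<^sup>2))"
proof -
  interpret prob_space M by (rule M)
  have Xm[measurable]: "X \<in> borel_measurable M"
    using distributed_measurable[OF D] by (simp add: measurable_cong_sets[OF refl sets_lborel])
  let ?S = "{z::real. a \<le> \<bar>z\<bar>}"
  have Sm[measurable]: "?S \<in> sets borel" by measurable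
  have "measure M {x\<in>space M. a \<le> \<bar>X x\<bar>} = (\<integral>x. indicator ?S (X x) \<partial>M)"
  proof -
    have "{x\<in>space M. a \<le> \<bar>X x\<bar>} \<in> sets M" by measurable
    then have "measure M {x\<in>space M. a \<le> \<bar>X x\<bar>} = (\<integral>x. indicator {x\<in>space M. a \<le> \<bar>X x\<bar>} x \<partial>M)"
      by simp
    also have "\<dots> = (\<integral>x. indicator ?S (X x) \<partial>M)"
      by (intro Bochner_Integration.integral_cong[OF refl]) (auto simp: indicator_def)
    finally show ?thesis .
  qed
  also have "\<dots> = (\<integral>z. normal_density 0 \<sigma> z * indicator ?S z \<partial>lborel)"
    by (rule distributed_integral[OF D, symmetric]) (auto simp: s)
  also have "\<dots> \<le> (\<integral>z. sqrt 2 * exp (- a\<^sup>2 / (4 * \<sigma>\<^sup>2)) * normal_density 0 (sqrt 2 * \<sigma>) z \<partial>lborel)"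
  proof (rule integral_mono)
    show "integrable lborel (\<lambda>z. normal_density 0 \<sigma> z * indicator ?S z)"
      by (rule Bochner_Integration.integrable_bound[OF integrable_normal_density[where \<mu>=0 and \<sigma>=\<sigma>]])
         (auto simp: indicator_def s)
    show "integrable lborel (\<lambda>z. sqrt 2 * exp (- a\<^sup>2 / (4 * \<sigma>\<^sup>2)) * normal_density 0 (sqrt 2 * \<sigma>) z)"
      using integrable_normal_density[where \<mu>=0 and \<sigma>="sqrt 2 * \<sigma>"] s by simp
    fix z :: real
    show "normal_density 0 \<sigma> z * indicator ?S z \<le> sqrt 2 * exp (- a\<^sup>2 / (4 * \<sigma>\<^sup>2)) * normal_density 0 (sqrt 2 * \<sigma>) z"
    proof (cases "a \<le> \<bar>z\<bar>")
      case True
      then have "a\<^sup>2 \<le> z\<^sup>2" using a by (metis abs_le_square_iff abs_of_nonneg)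
      then have "exp (- z\<^sup>2 / (4 * \<sigma>\<^sup>2)) \<le> exp (- a\<^sup>2 / (4 * \<sigma>\<^sup>2))"
        using s by (auto simp: divide_right_mono)
      then show ?thesis using True nd_split[OF s, of z]
        by (simp add: indicator_def mult_right_mono)
    next
      case False
      then show ?thesis by (simp add: indicator_def)
    qed
  qed
  also have "\<dots> = sqrt 2 * exp (- a\<^sup>2 / (4 * \<sigma>\<^sup>2))"
    using integral_normal_density[where \<mu>=0 and \<sigma>="sqrt 2 * \<sigma>"] s by simp
  finally show ?thesis .
qed

lemma NN_integral: "f \<in> borel_measurable borel \<Longrightarrow> integral\<^sup>L NN f = (\<integral>x. normal_density 0 1 x * f x \<partial>lborel)"
  by (subst integral_density) auto

lemma NN_integrable: "f \<in> borel_measurable borel \<Longrightarrow> integrable NN f \<longleftrightarrow> integrable lborel (\<lambda>x. normal_density 0 1 x * f x)"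
  by (subst integrable_density) auto

lemma NN_id: "integrable NN (\<lambda>x. x)" "integral\<^sup>L NN (\<lambda>x. x) = 0"
  using integrable_std_normal_moment[of 1] integral_std_normal_moment_odd[of 0]
  by (simp_all add: NN_integral NN_integrable)

lemma NN_abs: "integrable NN (\<lambda>x. \<bar>x\<bar>)"
  using integrable_std_normal_moment_abs[of 1]
  by (simp add: NN_integrable)

lemma NN_tail_lower:
  assumes a: "a \<ge> 0" and e: "\<eta> > 0"
  shows "measure NN {a..} \<ge> \<eta> * normal_density 0 1 (a + \<eta>)"
proof -
  interpret prob_space NN by (rule prob_NN)
  have "measure NN {a..} = integral\<^sup>L NN (indicator {a..})"
    by simp
  also have "\<dots> = (\<integral>x. normal_density 0 1 x * indicator {a..} x \<partial>lborel)"
    by (rule NN_integral) simp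
  also have "\<dots> \<ge> (\<integral>x. normal_density 0 1 (a + \<eta>) * indicator {a..a+\<eta>} x \<partial>lborel)"
  proof (rule integral_mono)
    show "integrable lborel (\<lambda>x. normal_density 0 1 x * indicator {a..} x)"
      by (rule Bochner_Integration.integrable_bound[OF integrable_normal_density[where \<mu>=0 and \<sigma>=1]])
         (auto simp: indicator_def)
    show "integrable lborel (\<lambda>x. normal_density 0 1 (a + \<eta>) * indicator {a..a+\<eta>} x)"
      using e by (intro integrable_mult_right integrable_real_indicator) auto
    fix x :: real
    show "normal_density 0 1 (a + \<eta>) * indicator {a..a+\<eta>} x \<le> normal_density 0 1 x * indicator {a..} x"
    proof (cases "x \<in> {a..a+\<eta>}")
      case True
      then have "x\<^sup>2 \<le> (a+\<eta>)\<^sup>2" using a by (intro power_mono) auto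
      then show ?thesis using True by (auto simp: normal_density_def indicator_def divide_right_mono)
    qed (auto simp: indicator_def)
  qed
  also have "(\<integral>x. normal_density 0 1 (a + \<eta>) * indicator {a..a+\<eta>} x \<partial>lborel) = normal_density 0 1 (a + \<eta>) * \<eta>"
    using e by simp
  finally show ?thesis by (simp add: mult.commute)
qed



definition wsum :: "real \<Rightarrow> enat \<Rightarrow> real" where
  "wsum \<gamma> e = (\<Sum>t. if enat t \<le> e then \<gamma> ^ t else 0)"

definition gfun :: "real \<Rightarrow> real \<Rightarrow> (real \<times> (nat \<Rightarrow> real) \<Rightarrow> enat) \<Rightarrow> real \<times> (nat \<Rightarrow> real) \<Rightarrow> real" where
  "gfun \<gamma> lam \<tau> = (\<lambda>\<omega>. \<Sum>t. if enat t \<le> \<tau> \<omega> then \<gamma> ^ t * (arm_quality \<omega> - lam) else 0)"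

lemma wsum_summable:
  fixes \<gamma> :: real
  assumes "0 \<le> \<gamma>" "\<gamma> < 1"
  shows "summable (\<lambda>t. if enat t \<le> e then \<gamma> ^ t else 0)"
  by (rule summable_comparison_test[OF _ summable_geometric[of \<gamma>]]) (use assms in auto)

lemma wsum_bounds:
  assumes "0 \<le> \<gamma>" "\<gamma> < 1"
  shows "1 \<le> wsum \<gamma> e" "wsum \<gamma> e \<le> 1 / (1 - \<gamma>)"
proof -
  note s = wsum_summable[OF assms, of e]
  have "(\<Sum>t<1. if enat t \<le> e then \<gamma> ^ t else 0) \<le> wsum \<gamma> e"
    unfolding wsum_def by (rule sum_le_suminf[OF s]) (use assms in auto)
  then show "1 \<le> wsum \<gamma> e" by (simp add: zero_enat_def[symmetric])
  have "wsum \<gamma> e \<le> (\<Sum>t. \<gamma> ^ t)"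
    unfolding wsum_def by (rule suminf_le[OF _ s summable_geometric]) (use assms in auto)
  also have "\<dots> = 1 / (1 - \<gamma>)" using suminf_geometric[of \<gamma>] assms by simp
  finally show "wsum \<gamma> e \<le> 1 / (1 - \<gamma>)" .
qed

lemma gfun_eq:
  assumes "0 \<le> \<gamma>" "\<gamma> < 1"
  shows "gfun \<gamma> lam \<tau> \<omega> = wsum \<gamma> (\<tau> \<omega>) * (fst \<omega> - lam)"
  unfolding gfun_def wsum_def arm_quality_def
  by (subst suminf_mult2[OF wsum_summable[OF assms]]) (auto intro!: suminf_cong)

lemma wsum_infty:
  assumes "0 \<le> \<gamma>" "\<gamma> < 1"
  shows "wsum \<gamma> \<infinity> = 1 / (1 - \<gamma>)"
  unfolding wsum_def using suminf_geometric[of \<gamma>] assms by simp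

lemma wsum_enat:
  "wsum \<gamma> (enat n) = (\<Sum>t\<le>n. \<gamma> ^ t)"
  unfolding wsum_def by (subst suminf_finite[of "{..n}"]) auto

lemma BS_fst:
  fixes f :: "real \<Rightarrow> real"
  assumes [measurable]: "f \<in> borel_measurable borel" and i: "integrable NN f"
  shows "integrable (bandit_space 0 1) (\<lambda>\<omega>. f (fst \<omega>))"
    "integral\<^sup>L (bandit_space 0 1) (\<lambda>\<omega>. f (fst \<omega>)) = integral\<^sup>L NN f"
proof -
  interpret prob_space noise_space by (rule prob_noise)
  have d: "distr (bandit_space 0 1) NN fst = NN" unfolding BS_eq by (rule distr_pair_fst)
  have fm: "fst \<in> measurable (bandit_space 0 1) NN" unfolding BS_eq by simp
  have fb: "f \<in> borel_measurable NN" by simp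
  show "integrable (bandit_space 0 1) (\<lambda>\<omega>. f (fst \<omega>))"
    using integrable_distr_eq[OF fm fb] i d by simp
  show "integral\<^sup>L (bandit_space 0 1) (\<lambda>\<omega>. f (fst \<omega>)) = integral\<^sup>L NN f"
    using integral_distr[OF fm fb] d by simp
qed

lemma history_sets:
  "sets (history 0 1 sW t) \<subseteq> sets (bandit_space 0 1)"
  unfolding history_def
  by (rule sets_image_in_sets[OF refl]) (rule measurable_restrict, simp)

lemma adm_sets:
  assumes "admissible_stop 0 1 sW \<tau>"
  shows "{\<omega>. enat t \<le> \<tau> \<omega>} \<in> sets (bandit_space 0 1)"
proof (cases t)
  case 0
  then show ?thesis using sets.top[of "bandit_space 0 1"] by (simp add: space_BS zero_enat_def[symmetric])
next
  case (Suc k)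
  have "{\<omega>\<in>space (bandit_space 0 1). \<tau> \<omega> \<le> enat k} \<in> sets (bandit_space 0 1)"
    using assms history_sets unfolding admissible_stop_def by blast
  then have "space (bandit_space 0 1) - {\<omega>\<in>space (bandit_space 0 1). \<tau> \<omega> \<le> enat k} \<in> sets (bandit_space 0 1)"
    by auto
  also have "space (bandit_space 0 1) - {\<omega>\<in>space (bandit_space 0 1). \<tau> \<omega> \<le> enat k} = {\<omega>. enat t \<le> \<tau> \<omega>}"
    using Suc by (auto simp: space_BS Suc_ile_eq not_le)
  finally show ?thesis .
qed

lemma gfun_meas:
  assumes "admissible_stop 0 1 sW \<tau>"
  shows "gfun \<gamma> lam \<tau> \<in> borel_measurable (bandit_space 0 1)"
proof -
  have *: "(\<lambda>\<omega>. if enat t \<le> \<tau> \<omega> then \<gamma> ^ t * (arm_quality \<omega> - lam) else 0) =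
     (\<lambda>\<omega>. if \<omega> \<in> {\<omega>. enat t \<le> \<tau> \<omega>} then \<gamma> ^ t * (arm_quality \<omega> - lam) else 0)" for t
    by auto
  show ?thesis unfolding gfun_def
    apply (rule borel_measurable_suminf)
    apply (subst *)
    apply (rule measurable_If_set)
    using adm_sets[OF assms] by (auto simp: arm_quality_def BS_eq)
qed



lemma NN_int_facts:
  "integrable NN (\<lambda>x. (\<bar>x\<bar> + \<bar>lam\<bar>) / (1 - \<gamma>))"
  "integral\<^sup>L NN (\<lambda>x. (\<bar>x\<bar> + \<bar>lam\<bar>) / (1 - \<gamma>)) = (integral\<^sup>L NN (\<lambda>x. \<bar>x\<bar>) + \<bar>lam\<bar>) / (1 - \<gamma>)"
  "integrable NN (\<lambda>x. (x - lam) + \<bar>x\<bar> / (1 - \<gamma>))"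
  "integral\<^sup>L NN (\<lambda>x. (x - lam) + \<bar>x\<bar> / (1 - \<gamma>)) = - lam + integral\<^sup>L NN (\<lambda>x. \<bar>x\<bar>) / (1 - \<gamma>)"
proof -
  interpret prob_space NN by (rule prob_NN)
  have p1: "measure NN UNIV = 1" using prob_space by simp
  show "integrable NN (\<lambda>x. (\<bar>x\<bar> + \<bar>lam\<bar>) / (1 - \<gamma>))"
    using NN_abs by auto
  show "integral\<^sup>L NN (\<lambda>x. (\<bar>x\<bar> + \<bar>lam\<bar>) / (1 - \<gamma>)) = (integral\<^sup>L NN (\<lambda>x. \<bar>x\<bar>) + \<bar>lam\<bar>) / (1 - \<gamma>)"
    using NN_abs by (simp add: Bochner_Integration.integral_add p1)
  show "integrable NN (\<lambda>x. (x - lam) + \<bar>x\<bar> / (1 - \<gamma>))"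
    using NN_abs NN_id by auto
  show "integral\<^sup>L NN (\<lambda>x. (x - lam) + \<bar>x\<bar> / (1 - \<gamma>)) = - lam + integral\<^sup>L NN (\<lambda>x. \<bar>x\<bar>) / (1 - \<gamma>)"
    using NN_abs NN_id by (simp add: Bochner_Integration.integral_add Bochner_Integration.integral_diff p1)
qed

lemma gfun_bounds:
  assumes adm: "admissible_stop 0 1 sW \<tau>" and g: "0 < \<gamma>" "\<gamma> < 1"
  shows "integrable (bandit_space 0 1) (gfun \<gamma> lam \<tau>)"
    "integral\<^sup>L (bandit_space 0 1) (gfun \<gamma> lam \<tau>) \<le> (integral\<^sup>L NN (\<lambda>x. \<bar>x\<bar>) + \<bar>lam\<bar>) / (1 - \<gamma>)"
    "lam \<ge> 0 \<Longrightarrow> integral\<^sup>L (bandit_space 0 1) (gfun \<gamma> lam \<tau>) \<le> - lam + integral\<^sup>L NN (\<lambda>x. \<bar>x\<bar>) / (1 - \<gamma>)"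
proof -
  have m[measurable]: "gfun \<gamma> lam \<tau> \<in> borel_measurable (bandit_space 0 1)"
    by (rule gfun_meas[OF adm])
  have W: "1 \<le> wsum \<gamma> e" "wsum \<gamma> e \<le> 1 / (1 - \<gamma>)" for e
    using wsum_bounds[of \<gamma> e] g by auto
  have ge: "gfun \<gamma> lam \<tau> \<omega> = wsum \<gamma> (\<tau> \<omega>) * (fst \<omega> - lam)" for \<omega>
    using gfun_eq[of \<gamma>] g by auto
  have b1: "\<bar>gfun \<gamma> lam \<tau> \<omega>\<bar> \<le> (\<bar>fst \<omega>\<bar> + \<bar>lam\<bar>) / (1 - \<gamma>)" for \<omega>
  proof -
    have "\<bar>gfun \<gamma> lam \<tau> \<omega>\<bar> = wsum \<gamma> (\<tau> \<omega>) * \<bar>fst \<omega> - lam\<bar>"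
      using W(1)[of "\<tau> \<omega>"] by (simp add: ge abs_mult)
    also have "\<dots> \<le> 1 / (1 - \<gamma>) * \<bar>fst \<omega> - lam\<bar>"
      by (rule mult_right_mono[OF W(2)]) simp
    also have "\<dots> \<le> 1 / (1 - \<gamma>) * (\<bar>fst \<omega>\<bar> + \<bar>lam\<bar>)"
      using g by (intro mult_left_mono) auto
    finally show ?thesis by simp
  qed
  have i1: "integrable (bandit_space 0 1) (\<lambda>\<omega>. (\<bar>fst \<omega>\<bar> + \<bar>lam\<bar>) / (1 - \<gamma>))"
    by (rule BS_fst(1)[OF _ NN_int_facts(1)]) simp
  show ig: "integrable (bandit_space 0 1) (gfun \<gamma> lam \<tau>)"
    by (rule Bochner_Integration.integrable_bound[OF i1 m]) (use b1 g in auto)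
  have "integral\<^sup>L (bandit_space 0 1) (gfun \<gamma> lam \<tau>) \<le> integral\<^sup>L (bandit_space 0 1) (\<lambda>\<omega>. (\<bar>fst \<omega>\<bar> + \<bar>lam\<bar>) / (1 - \<gamma>))"
    by (rule integral_mono[OF ig i1]) (use b1 in \<open>auto simp: abs_le_iff\<close>)
  also have "\<dots> = integral\<^sup>L NN (\<lambda>x. (\<bar>x\<bar> + \<bar>lam\<bar>) / (1 - \<gamma>))"
    by (rule BS_fst(2)[OF _ NN_int_facts(1)]) simp
  also have "\<dots> = (integral\<^sup>L NN (\<lambda>x. \<bar>x\<bar>) + \<bar>lam\<bar>) / (1 - \<gamma>)"
    by (rule NN_int_facts(2))
  finally show "integral\<^sup>L (bandit_space 0 1) (gfun \<gamma> lam \<tau>) \<le> (integral\<^sup>L NN (\<lambda>x. \<bar>x\<bar>) + \<bar>lam\<bar>) / (1 - \<gamma>)" .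
  assume lam: "lam \<ge> 0"
  have b2: "gfun \<gamma> lam \<tau> \<omega> \<le> (fst \<omega> - lam) + \<bar>fst \<omega>\<bar> / (1 - \<gamma>)" for \<omega>
  proof (cases "fst \<omega> - lam \<ge> 0")
    case True
    have "gfun \<gamma> lam \<tau> \<omega> \<le> 1 / (1 - \<gamma>) * (fst \<omega> - lam)"
      unfolding ge by (rule mult_right_mono[OF W(2) True])
    also have "\<dots> = (fst \<omega> - lam) + \<gamma> * (fst \<omega> - lam) / (1 - \<gamma>)"
      using g by (simp add: field_simps)
    also have "\<gamma> * (fst \<omega> - lam) \<le> \<bar>fst \<omega>\<bar>"
    proof -
      have "\<gamma> * (fst \<omega> - lam) \<le> 1 * (fst \<omega> - lam)"
        using g True by (intro mult_right_mono) auto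
      then show ?thesis using lam True by auto
    qed
    then have "(fst \<omega> - lam) + \<gamma> * (fst \<omega> - lam) / (1 - \<gamma>) \<le> (fst \<omega> - lam) + \<bar>fst \<omega>\<bar> / (1 - \<gamma>)"
      using g by (simp add: divide_right_mono)
    finally show ?thesis .
  next
    case False
    have "gfun \<gamma> lam \<tau> \<omega> \<le> 1 * (fst \<omega> - lam)"
      unfolding ge using False W(1)[of "\<tau> \<omega>"] by (intro mult_right_mono_neg) auto
    also have "\<dots> \<le> (fst \<omega> - lam) + \<bar>fst \<omega>\<bar> / (1 - \<gamma>)"
      using g by simp
    finally show ?thesis .
  qed
  have i2: "integrable (bandit_space 0 1) (\<lambda>\<omega>. (fst \<omega> - lam) + \<bar>fst \<omega>\<bar> / (1 - \<gamma>))"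
    by (rule BS_fst(1)[OF _ NN_int_facts(3)]) simp
  have "integral\<^sup>L (bandit_space 0 1) (gfun \<gamma> lam \<tau>) \<le> integral\<^sup>L (bandit_space 0 1) (\<lambda>\<omega>. (fst \<omega> - lam) + \<bar>fst \<omega>\<bar> / (1 - \<gamma>))"
    by (rule integral_mono[OF ig i2]) (use b2 in auto)
  also have "\<dots> = integral\<^sup>L NN (\<lambda>x. (x - lam) + \<bar>x\<bar> / (1 - \<gamma>))"
    by (rule BS_fst(2)[OF _ NN_int_facts(3)]) simp
  also have "\<dots> = - lam + integral\<^sup>L NN (\<lambda>x. \<bar>x\<bar>) / (1 - \<gamma>)"
    by (rule NN_int_facts(4))
  finally show "integral\<^sup>L (bandit_space 0 1) (gfun \<gamma> lam \<tau>) \<le> - lam + integral\<^sup>L NN (\<lambda>x. \<bar>x\<bar>) / (1 - \<gamma>)" .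
qed



definition tau_c :: "real \<Rightarrow> nat \<Rightarrow> real \<Rightarrow> real \<times> (nat \<Rightarrow> real) \<Rightarrow> enat" where
  "tau_c sW n c \<omega> = (if real n * c \<le> (\<Sum>i<n. reward sW i \<omega>) then \<infinity> else enat n)"

lemma tau_c_adm:
  assumes n: "n > 0"
  shows "admissible_stop 0 1 sW (tau_c sW n c)"
  unfolding admissible_stop_def
proof (intro conjI ballI allI)
  fix \<omega> show "1 \<le> tau_c sW n c \<omega>"
    using n by (auto simp: tau_c_def one_enat_def)
next
  fix t :: nat
  let ?F = "\<lambda>\<omega>. \<lambda>i\<in>{..<t}. reward sW i \<omega>"
  let ?P = "\<Pi>\<^sub>M i\<in>{..<t}. (borel :: real measure)"
  show "{\<omega> \<in> space (bandit_space 0 1). tau_c sW n c \<omega> \<le> enat t} \<in> sets (history 0 1 sW t)"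
  proof (cases "t < n")
    case True
    then have "{\<omega> \<in> space (bandit_space 0 1). tau_c sW n c \<omega> \<le> enat t} = {}"
      by (auto simp: tau_c_def)
    then show ?thesis by (metis sets.empty_sets)
  next
    case False
    let ?A = "{x \<in> space ?P. (\<Sum>i<n. x i) < real n * c}"
    have "(\<lambda>x. \<Sum>i<n. x i) \<in> borel_measurable ?P"
      using False by (intro borel_measurable_sum measurable_component_singleton) auto
    then have A: "?A \<in> sets ?P" by measurable
    have "{\<omega> \<in> space (bandit_space 0 1). tau_c sW n c \<omega> \<le> enat t} = ?F -` ?A \<inter> space (bandit_space 0 1)"
      using False by (auto simp: tau_c_def space_PiM not_le)
    also have "\<dots> \<in> sets (history 0 1 sW t)"
      unfolding history_def by (rule in_vimage_algebra[OF A])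
    finally show ?thesis .
  qed
qed

lemma gfun_tau_c:
  assumes sW: "sW > 0" and g: "0 < \<gamma>" "\<gamma> < 1" and n: "n > 0"
  shows "gfun \<gamma> lam (tau_c sW n c) (\<theta>, y) =
     (\<Sum>t\<le>n. \<gamma> ^ t) * (\<theta> - lam) + (1 / (1 - \<gamma>) - (\<Sum>t\<le>n. \<gamma> ^ t)) *
       (indicator {c - sW * (\<Sum>i<n. y i) / real n..} \<theta> * (\<theta> - lam))"
proof -
  have r: "(\<Sum>i<n. reward sW i (\<theta>, y)) = real n * \<theta> + sW * (\<Sum>i<n. y i)"
    by (simp add: reward_def sum.distrib sum_distrib_left)
  have iff: "real n * c \<le> real n * \<theta> + sW * (\<Sum>i<n. y i) \<longleftrightarrow> c - sW * (\<Sum>i<n. y i) / real n \<le> \<theta>"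
    using n by (simp add: field_simps)
  have ge: "gfun \<gamma> lam (tau_c sW n c) (\<theta>, y) = wsum \<gamma> (tau_c sW n c (\<theta>, y)) * (\<theta> - lam)"
    using gfun_eq[of \<gamma>] g by auto
  show ?thesis
  proof (cases "real n * c \<le> real n * \<theta> + sW * (\<Sum>i<n. y i)")
    case True
    then have "c - sW * (\<Sum>i<n. y i) / real n \<le> \<theta>" using iff by simp
    then have "indicator {c - sW * (\<Sum>i<n. y i) / real n..} \<theta> = (1::real)" by simp
    moreover have "tau_c sW n c (\<theta>, y) = \<infinity>" using True unfolding tau_c_def r by simp
    ultimately show ?thesis unfolding ge using g by (simp add: wsum_infty algebra_simps)
  next
    case False
    then have "\<not> c - sW * (\<Sum>i<n. y i) / real n \<le> \<theta>" using iff by simp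
    then have "indicator {c - sW * (\<Sum>i<n. y i) / real n..} \<theta> = (0::real)" by simp
    moreover have "tau_c sW n c (\<theta>, y) = enat n" using False unfolding tau_c_def r by simp
    ultimately show ?thesis unfolding ge using g by (simp add: wsum_enat algebra_simps)
  qed
qed



lemma NN_lin:
  fixes f :: "real \<Rightarrow> real"
  assumes "integrable NN f"
  shows "integrable NN (\<lambda>x. A * (x - lam) + B * f x)"
    "integral\<^sup>L NN (\<lambda>x. A * (x - lam) + B * f x) = - A * lam + B * integral\<^sup>L NN f"
proof -
  interpret prob_space NN by (rule prob_NN)
  have p1: "measure NN UNIV = 1" using prob_space by simp
  show "integrable NN (\<lambda>x. A * (x - lam) + B * f x)"
    using assms NN_id by auto
  have "integral\<^sup>L NN (\<lambda>x. A * (x - lam) + B * f x) = integral\<^sup>L NN (\<lambda>x. A * (x - lam)) + integral\<^sup>L NN (\<lambda>x. B * f x)"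
    using assms NN_id by (intro Bochner_Integration.integral_add) auto
  also have "integral\<^sup>L NN (\<lambda>x. A * (x - lam)) = A * (integral\<^sup>L NN (\<lambda>x. x) - lam)"
    using NN_id p1 by (simp add: Bochner_Integration.integral_diff)
  finally show "integral\<^sup>L NN (\<lambda>x. A * (x - lam) + B * f x) = - A * lam + B * integral\<^sup>L NN f"
    using NN_id by (simp add: algebra_simps)
qed

lemma noise_set_meas:
  "{y. \<delta> < \<bar>sW * (\<Sum>i<n. y i) / real n\<bar>} \<in> sets noise_space"
proof -
  have "(\<lambda>y. \<Sum>i<n. y i) \<in> borel_measurable (\<Pi>\<^sub>M i\<in>(UNIV::nat set). (borel::real measure))"
    by (intro borel_measurable_sum measurable_component_singleton) auto
  then have "{y \<in> space (\<Pi>\<^sub>M i\<in>(UNIV::nat set). (borel::real measure)). \<delta> < \<bar>sW * (\<Sum>i<n. y i) / real n\<bar>}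
     \<in> sets (\<Pi>\<^sub>M i\<in>(UNIV::nat set). (borel::real measure))"
    by measurable
  then show ?thesis by (simp add: sets_noise space_PiM)
qed

lemma value_lower:
  fixes sW \<gamma> lam \<delta> :: real and n :: nat
  assumes sW: "sW > 0" and g: "0 < \<gamma>" "\<gamma> < 1" and n: "n > 0" and lam: "lam \<ge> 0" and d: "\<delta> > 0"
  defines "A \<equiv> (\<Sum>t\<le>n. \<gamma> ^ t)"
  defines "B \<equiv> 1 / (1 - \<gamma>) - (\<Sum>t\<le>n. \<gamma> ^ t)"
  defines "Q \<equiv> measure NN {lam + 3 * \<delta>..}"
  defines "P \<equiv> measure noise_space {y. \<delta> < \<bar>sW * (\<Sum>i<n. y i) / real n\<bar>}"
  shows "- A * lam + B * (3 * \<delta> * Q - (3 * \<delta> * Q + lam) * P)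
     \<le> integral\<^sup>L (bandit_space 0 1) (gfun \<gamma> lam (tau_c sW n (lam + 2 * \<delta>)))"
proof -
  interpret pps: pair_prob_space NN noise_space by (rule pps)
  interpret NP: prob_space NN by (rule prob_NN)
  interpret NS: prob_space noise_space by (rule prob_noise)
  define c where "c = lam + 2 * \<delta>"
  define G where "G = gfun \<gamma> lam (tau_c sW n c)"
  define S where "S = {y. \<delta> < \<bar>sW * (\<Sum>i<n. y i) / real n\<bar>}"
  have Sm: "S \<in> sets noise_space" unfolding S_def by (rule noise_set_meas)
  have intG: "integrable (NN \<Otimes>\<^sub>M noise_space) G"
    using gfun_bounds(1)[OF tau_c_adm[OF n] g] unfolding G_def BS_eq by blast
  have cp: "(\<lambda>(x, y). G (x, y)) = G" by auto
  have intG': "integrable (NN \<Otimes>\<^sub>M noise_space) (\<lambda>(x, y). G (x, y))" using intG cp by simp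
  have E: "integral\<^sup>L (bandit_space 0 1) G = (\<integral>y. (\<integral>x. G (x, y) \<partial>NN) \<partial>noise_space)"
    using pps.integral_snd[OF intG'] cp unfolding BS_eq by simp
  have intI: "integrable noise_space (\<lambda>y. \<integral>x. G (x, y) \<partial>NN)"
    by (rule pps.integrable_snd[OF intG'])
  have B0: "B \<ge> 0"
    using wsum_bounds(2)[of \<gamma> "enat n"] g unfolding B_def by (simp add: wsum_enat)
  have Q1: "Q \<le> 1" unfolding Q_def by simp
  define k where "k = (\<lambda>y. - A * lam + B * (3 * \<delta> * Q - (3 * \<delta> * Q + lam) * indicator S y))"
  have intk: "integrable noise_space k"
    unfolding k_def using Sm
    by (intro Bochner_Integration.integrable_add Bochner_Integration.integrable_diff integrable_mult_right
        integrable_real_indicator) (auto simp: pps.M2.emeasure_eq_measure)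
  have inner: "k y \<le> (\<integral>x. G (x, y) \<partial>NN)" for y
  proof -
    define xx where "xx = c - sW * (\<Sum>i<n. y i) / real n"
    have Gx: "G (x, y) = A * (x - lam) + B * (indicator {xx..} x * (x - lam))" for x
      unfolding G_def xx_def A_def B_def by (rule gfun_tau_c[OF sW g n])
    have ih: "integrable NN (\<lambda>x. indicator {xx..} x * (x - lam))"
    proof (rule Bochner_Integration.integrable_bound)
      show "integrable NN (\<lambda>x. \<bar>x\<bar> + lam)" using NN_abs by auto
      show "AE x in NN. norm (indicator {xx..} x * (x - lam)) \<le> norm (\<bar>x\<bar> + lam)"
        using lam by (auto simp: indicator_def)
    qed simp
    have eqG: "(\<integral>x. G (x, y) \<partial>NN) = (\<integral>x. A * (x - lam) + B * (indicator {xx..} x * (x - lam)) \<partial>NN)"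
      by (simp add: Gx)
    show ?thesis
    proof (cases "y \<in> S")
      case False
      then have m: "\<bar>sW * (\<Sum>i<n. y i) / real n\<bar> \<le> \<delta>" unfolding S_def by auto
      have ki: "k y = - A * lam + B * (3 * \<delta> * Q)" unfolding k_def using False by simp
      have i3: "integrable NN (\<lambda>x. 3 * \<delta> * indicator {lam + 3 * \<delta>..} x)"
        by (intro integrable_mult_right integrable_real_indicator) (auto simp: pps.M1.emeasure_eq_measure)
      have "k y = (\<integral>x. A * (x - lam) + B * (3 * \<delta> * indicator {lam + 3 * \<delta>..} x) \<partial>NN)"
        unfolding ki NN_lin(2)[OF i3] Q_def by simp
      also have "\<dots> \<le> (\<integral>x. A * (x - lam) + B * (indicator {xx..} x * (x - lam)) \<partial>NN)"
      proof (rule integral_mono[OF NN_lin(1)[OF i3] NN_lin(1)[OF ih]])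
        fix x
        obtain mm where mm: "mm = sW * (\<Sum>i<n. y i) / real n" by simp
        have xxe: "xx = lam + 2 * \<delta> - mm" unfolding xx_def c_def mm by simp
        have "\<bar>mm\<bar> \<le> \<delta>" using m mm by simp
        then have "3 * \<delta> * indicator {lam + 3 * \<delta>..} x \<le> indicator {xx..} x * (x - lam)"
          using d unfolding xxe by (auto simp: indicator_def abs_le_iff)
        then show "A * (x - lam) + B * (3 * \<delta> * indicator {lam + 3 * \<delta>..} x) \<le>
             A * (x - lam) + B * (indicator {xx..} x * (x - lam))"
          using B0 by (simp add: mult_left_mono)
      qed
      finally show ?thesis by (simp add: eqG)
    next
      case True
      have ki: "k y = - A * lam + B * (- lam)" unfolding k_def using True by simp
      define l where "l = (\<lambda>x::real. if xx < 0 then x - lam else - lam)"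
      have il: "integrable NN l" unfolding l_def using NN_id by (cases "xx < 0") auto
      have intl: "integral\<^sup>L NN l = - lam"
        unfolding l_def using NN_id pps.M1.prob_space
        by (cases "xx < 0") (auto simp: Bochner_Integration.integral_diff)
      have "k y = (\<integral>x. A * (x - lam) + B * l x \<partial>NN)"
        unfolding ki NN_lin(2)[OF il] intl by simp
      also have "\<dots> \<le> (\<integral>x. A * (x - lam) + B * (indicator {xx..} x * (x - lam)) \<partial>NN)"
      proof (rule integral_mono[OF NN_lin(1)[OF il] NN_lin(1)[OF ih]])
        fix x
        have "l x \<le> indicator {xx..} x * (x - lam)"
          using lam unfolding l_def by (auto simp: indicator_def)
        then show "A * (x - lam) + B * l x \<le> A * (x - lam) + B * (indicator {xx..} x * (x - lam))"
          using B0 by (simp add: mult_left_mono)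
      qed
      finally show ?thesis by (simp add: eqG)
    qed
  qed
  have kk: "k = (\<lambda>y. (- A * lam + B * (3 * \<delta> * Q)) - (B * (3 * \<delta> * Q + lam)) * indicator S y)"
    unfolding k_def by (auto simp: algebra_simps)
  have iS: "integrable noise_space (\<lambda>y. (B * (3 * \<delta> * Q + lam)) * indicator S y :: real)"
    using Sm by (intro integrable_mult_right integrable_real_indicator) (auto simp: pps.M2.emeasure_eq_measure)
  have sp: "measure noise_space (space noise_space) = 1" by (rule pps.M2.prob_space)
  have ek: "integral\<^sup>L noise_space k = - A * lam + B * (3 * \<delta> * Q - (3 * \<delta> * Q + lam) * P)"
    unfolding kk P_def S_def[symmetric]
    apply (subst Bochner_Integration.integral_diff[OF _ iS])
     apply simp
    apply (subst integral_mult_right_zero)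
    using Sm sp by (simp add: pps.M2.emeasure_eq_measure algebra_simps)
  have "integral\<^sup>L noise_space k \<le> (\<integral>y. (\<integral>x. G (x, y) \<partial>NN) \<partial>noise_space)"
    by (rule integral_mono[OF intk intI inner])
  then show ?thesis using E ek unfolding G_def c_def by simp
qed



lemma P_bound:
  assumes sW: "sW > 0" and n: "n > 0" and d: "\<delta> > 0"
  shows "measure noise_space {y. \<delta> < \<bar>sW * (\<Sum>i<n. y i) / real n\<bar>} \<le> sqrt 2 * exp (- (real n * \<delta>\<^sup>2 / (4 * sW\<^sup>2)))"
proof -
  interpret NS: prob_space noise_space by (rule prob_noise)
  have Dm: "(\<lambda>y. \<Sum>i<n. y i) \<in> borel_measurable noise_space"
    unfolding meas_noise_cong by (intro borel_measurable_sum measurable_component_singleton) auto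
  have "measure noise_space {y. \<delta> < \<bar>sW * (\<Sum>i<n. y i) / real n\<bar>}
      \<le> measure noise_space {y\<in>space noise_space. real n * \<delta> / sW \<le> \<bar>\<Sum>i<n. y i\<bar>}"
  proof (rule NS.finite_measure_mono)
    show "{y\<in>space noise_space. real n * \<delta> / sW \<le> \<bar>\<Sum>i<n. y i\<bar>} \<in> sets noise_space"
      using Dm by measurable
    show "{y. \<delta> < \<bar>sW * (\<Sum>i<n. y i) / real n\<bar>} \<subseteq> {y\<in>space noise_space. real n * \<delta> / sW \<le> \<bar>\<Sum>i<n. y i\<bar>}"
    proof
      fix y assume "y \<in> {y. \<delta> < \<bar>sW * (\<Sum>i<n. y i) / real n\<bar>}"
      then have "\<delta> < sW * \<bar>\<Sum>i<n. y i\<bar> / real n" using sW by (simp add: abs_mult)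
      then have "real n * \<delta> < sW * \<bar>\<Sum>i<n. y i\<bar>" using n by (simp add: field_simps)
      then have "real n * \<delta> / sW \<le> \<bar>\<Sum>i<n. y i\<bar>" using sW by (simp add: field_simps)
      then show "y \<in> {y\<in>space noise_space. real n * \<delta> / sW \<le> \<bar>\<Sum>i<n. y i\<bar>}"
        by (simp add: space_noise)
    qed
  qed
  also have "\<dots> \<le> sqrt 2 * exp (- (real n * \<delta> / sW)\<^sup>2 / (4 * (sqrt (real n))\<^sup>2))"
    by (rule normal_tail[OF prob_noise sum_distributed[OF n]]) (use n d sW in auto)
  also have "- (real n * \<delta> / sW)\<^sup>2 / (4 * (sqrt (real n))\<^sup>2) = - (real n * \<delta>\<^sup>2 / (4 * sW\<^sup>2))"
    using n sW by (simp add: power2_eq_square field_simps)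
  finally show ?thesis .
qed

lemma gv_eq: "gittins_value 0 1 sW \<gamma> lam =
   (SUP \<tau>\<in>{\<tau>. admissible_stop 0 1 sW \<tau>}. integral\<^sup>L (bandit_space 0 1) (gfun \<gamma> lam \<tau>))"
  unfolding gittins_value_def gfun_def ..

lemma index_ge:
  assumes g: "0 < \<gamma>" "\<gamma> < 1" and adm: "admissible_stop 0 1 sW \<tau>0"
    and v: "integral\<^sup>L (bandit_space 0 1) (gfun \<gamma> lam0 \<tau>0) \<ge> 0"
  shows "gittins_index 0 1 sW \<gamma> \<ge> lam0"
proof -
  define T where "T = {\<tau>. admissible_stop 0 1 sW \<tau>}"
  define C where "C = integral\<^sup>L NN (\<lambda>x. \<bar>x\<bar>)"
  have T0: "\<tau>0 \<in> T" using adm unfolding T_def by simp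
  have bdd: "bdd_above ((\<lambda>\<tau>. integral\<^sup>L (bandit_space 0 1) (gfun \<gamma> lam \<tau>)) ` T)" for lam
    by (rule bdd_aboveI[where M="(C + \<bar>lam\<bar>) / (1 - \<gamma>)"])
       (use gfun_bounds(2)[OF _ g] in \<open>auto simp: T_def C_def\<close>)
  have "gittins_value 0 1 sW \<gamma> lam0 \<ge> integral\<^sup>L (bandit_space 0 1) (gfun \<gamma> lam0 \<tau>0)"
    unfolding gv_eq T_def[symmetric] by (rule cSUP_upper[OF T0 bdd])
  then have inS: "lam0 \<in> {lam. gittins_value 0 1 sW \<gamma> lam \<ge> 0}" using v by simp
  have bS: "bdd_above {lam. gittins_value 0 1 sW \<gamma> lam \<ge> 0}"
  proof (rule bdd_aboveI[where M="max 0 (C / (1 - \<gamma>)) + 1"])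
    fix lam assume "lam \<in> {lam. gittins_value 0 1 sW \<gamma> lam \<ge> 0}"
    then have ge: "gittins_value 0 1 sW \<gamma> lam \<ge> 0" by simp
    show "lam \<le> max 0 (C / (1 - \<gamma>)) + 1"
    proof (rule ccontr)
      assume "\<not> ?thesis"
      then have l: "lam \<ge> 0" "lam > C / (1 - \<gamma>)" by auto
      have "gittins_value 0 1 sW \<gamma> lam \<le> - lam + C / (1 - \<gamma>)"
        unfolding gv_eq T_def[symmetric]
        by (rule cSUP_least) (use T0 gfun_bounds(3)[OF _ g] l in \<open>auto simp: T_def C_def\<close>)
      then show False using ge l by simp
    qed
  qed
  show ?thesis unfolding gittins_index_def by (rule cSup_upper[OF inS bS])
qed



definition G0 :: "real \<Rightarrow> real" where
  "G0 L = 3 / L ^ 2 / sqrt (2 * pi) * exp (- ((L - 1 / sqrt L + 4 / L) ^ 2) / 2) - (1 + L) * sqrt 2 * exp (- (L ^ 2))"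

lemma helper3: "3 * (1 / L) * ((1 / L) * (1 / s * E)) = 3 / L ^ 2 / s * (E::real)"
  by (simp add: power2_eq_square)

lemma key:
  fixes sW \<gamma> L :: real
  assumes sW: "sW > 0" and g: "0 < \<gamma>" "\<gamma> < 1" and e: "1 - \<gamma> = exp (- (L ^ 2) / 2)"
    and L3: "L \<ge> 3" and Ls: "4 * sW ^ 2 + 3 \<le> L"
    and R1: "G0 L * (1 - L ^ 5 * exp (- (L ^ 2) / 2)) * exp (L ^ 2 / 2) \<ge> L ^ 5 * L"
    and R2: "G0 L \<ge> 0"
    and R3: "L ^ 5 * exp (- (L ^ 2) / 2) \<le> 1"
  shows "gittins_index 0 1 sW \<gamma> \<ge> L - 1 / sqrt L"
proof -
  define lam where "lam = L - 1 / sqrt L"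
  define \<delta> where "\<delta> = 1 / L"
  define K where "K = 4 * sW ^ 2 * L ^ 4 + 1"
  define n where "n = nat \<lceil>K\<rceil>"
  have sL: "sqrt L \<ge> 1" using L3 by simp
  have isL: "1 / sqrt L \<le> 1" "1 / sqrt L \<ge> 0" using sL by auto
  have lam0: "lam \<ge> 0" "lam \<le> L" unfolding lam_def using isL L3 by linarith+
  have d0: "\<delta> > 0" "3 * \<delta> \<le> 1" using L3 unfolding \<delta>_def by (auto simp: field_simps)
  have K1: "K \<ge> 1" unfolding K_def by simp
  have nK: "real n \<ge> K" "real n \<le> K + 1" unfolding n_def using K1 by linarith+
  have n0: "n > 0" using nK K1 by linarith
  define A where "A = (\<Sum>t\<le>n. \<gamma> ^ t)"
  define B where "B = 1 / (1 - \<gamma>) - (\<Sum>t\<le>n. \<gamma> ^ t)"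
  define Q where "Q = measure NN {lam + 3 * \<delta>..}"
  define P where "P = measure noise_space {y. \<delta> < \<bar>sW * (\<Sum>i<n. y i) / real n\<bar>}"
  have V: "- A * lam + B * (3 * \<delta> * Q - (3 * \<delta> * Q + lam) * P)
     \<le> integral\<^sup>L (bandit_space 0 1) (gfun \<gamma> lam (tau_c sW n (lam + 2 * \<delta>)))"
    unfolding A_def B_def Q_def P_def by (rule value_lower[OF sW g n0 lam0(1) d0(1)])
  have A0: "A \<ge> 0" unfolding A_def using g by (intro sum_nonneg) auto
  have A1: "A \<le> real n + 1"
  proof -
    have "A \<le> (\<Sum>t\<le>n. (1::real))" unfolding A_def using g by (intro sum_mono power_le_one) auto
    then show ?thesis by simp
  qed
  have nL: "real n + 1 \<le> L ^ 5"
  proof -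
    have L4: "L ^ 4 \<ge> 1" using L3 by (simp add: one_le_power)
    have "real n + 1 \<le> 4 * sW ^ 2 * L ^ 4 + 3" using nK unfolding K_def by simp
    also have "\<dots> \<le> (4 * sW ^ 2 + 3) * L ^ 4" using L4 by (simp add: algebra_simps)
    also have "\<dots> \<le> L * L ^ 4" using Ls L4 by (intro mult_right_mono) auto
    also have "L * L ^ 4 = L ^ 5" by (simp add: eval_nat_numeral)
    finally show ?thesis .
  qed
  have Beq: "B = \<gamma> ^ (n + 1) / (1 - \<gamma>)"
  proof -
    have "(\<Sum>t\<le>n. \<gamma> ^ t) = (\<Sum>t<Suc n. \<gamma> ^ t)" by (simp add: lessThan_Suc_atMost)
    also have "\<dots> = (\<gamma> ^ Suc n - 1) / (\<gamma> - 1)" using g by (intro geometric_sum) auto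
    finally show ?thesis unfolding B_def using g by (simp add: field_simps)
  qed
  have bern: "1 + real (n + 1) * (\<gamma> - 1) \<le> \<gamma> ^ (n + 1)"
    using Bernoulli_inequality[of "\<gamma> - 1" "n + 1"] g by simp
  have einv: "1 / (1 - \<gamma>) = exp (L ^ 2 / 2)" unfolding e by (simp add: exp_minus field_simps)
  define Bl where "Bl = (1 - L ^ 5 * exp (- (L ^ 2) / 2)) * exp (L ^ 2 / 2)"
  have Bl: "B \<ge> Bl"
  proof -
    have m: "real (n + 1) * exp (- (L ^ 2) / 2) \<le> L ^ 5 * exp (- (L ^ 2) / 2)"
      using nL by (intro mult_right_mono) auto
    have ge: "\<gamma> - 1 = - exp (- (L ^ 2) / 2)" using e by simp
    have "(1 - L ^ 5 * exp (- (L ^ 2) / 2)) \<le> 1 + real (n + 1) * (\<gamma> - 1)"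
      unfolding ge using m by simp
    also have "\<dots> \<le> \<gamma> ^ (n + 1)" by (rule bern)
    finally have "(1 - L ^ 5 * exp (- (L ^ 2) / 2)) * exp (L ^ 2 / 2) \<le> \<gamma> ^ (n + 1) * exp (L ^ 2 / 2)"
      by (intro mult_right_mono) auto
    moreover have "B = \<gamma> ^ (n + 1) * exp (L ^ 2 / 2)"
    proof -
      have "B = \<gamma> ^ (n + 1) * (1 / (1 - \<gamma>))" unfolding Beq by simp
      then show ?thesis using einv by simp
    qed
    ultimately show ?thesis unfolding Bl_def by simp
  qed
  have Bl0: "Bl \<ge> 0" unfolding Bl_def using R3 by (intro mult_nonneg_nonneg) auto
  have B0: "B \<ge> 0" using Bl Bl0 by linarith
  have Qb: "Q \<ge> \<delta> * normal_density 0 1 (lam + 3 * \<delta> + \<delta>)" "Q \<le> 1" "Q \<ge> 0"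
    unfolding Q_def using NN_tail_lower[of "lam + 3 * \<delta>" \<delta>] lam0 d0 prob_space.prob_le_1[OF prob_NN] by auto
  have Pb: "P \<le> sqrt 2 * exp (- (L ^ 2))" "P \<ge> 0"
  proof -
    have "P \<le> sqrt 2 * exp (- (real n * \<delta>\<^sup>2 / (4 * sW\<^sup>2)))"
      unfolding P_def by (rule P_bound[OF sW n0 d0(1)])
    also have "\<dots> \<le> sqrt 2 * exp (- (L ^ 2))"
    proof -
      have "L ^ 2 \<le> K * \<delta>\<^sup>2 / (4 * sW\<^sup>2)"
        unfolding K_def \<delta>_def using sW L3 by (simp add: field_simps power2_eq_square power4_eq_xxxx)
      also have "\<dots> \<le> real n * \<delta>\<^sup>2 / (4 * sW\<^sup>2)"
        using nK sW by (intro divide_right_mono mult_right_mono) auto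
      finally show ?thesis by simp
    qed
    finally show "P \<le> sqrt 2 * exp (- (L ^ 2))" .
    show "P \<ge> 0" unfolding P_def by simp
  qed
  define X where "X = 3 * \<delta> * Q - (3 * \<delta> * Q + lam) * P"
  have T1: "3 * \<delta> * Q \<ge> 3 / L ^ 2 / sqrt (2 * pi) * exp (- ((L - 1 / sqrt L + 4 / L) ^ 2) / 2)"
  proof -
    have eqx: "lam + 3 * \<delta> + \<delta> = L - 1 / sqrt L + 4 / L" unfolding lam_def \<delta>_def by simp
    have "3 * \<delta> * (\<delta> * normal_density 0 1 (lam + 3 * \<delta> + \<delta>)) =
        3 * (1 / L) * ((1 / L) * (1 / sqrt (2 * pi) * exp (- ((L - 1 / sqrt L + 4 / L) ^ 2) / 2)))"
      unfolding eqx by (simp add: std_normal_density_def \<delta>_def)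
    also have "\<dots> = 3 / L ^ 2 / sqrt (2 * pi) * exp (- ((L - 1 / sqrt L + 4 / L) ^ 2) / 2)"
      by (rule helper3)
    finally have "3 * \<delta> * (\<delta> * normal_density 0 1 (lam + 3 * \<delta> + \<delta>)) =
        3 / L ^ 2 / sqrt (2 * pi) * exp (- ((L - 1 / sqrt L + 4 / L) ^ 2) / 2)" .
    moreover have "3 * \<delta> * (\<delta> * normal_density 0 1 (lam + 3 * \<delta> + \<delta>)) \<le> 3 * \<delta> * Q"
      using Qb d0 by (intro mult_left_mono) auto
    ultimately show ?thesis by simp
  qed
  have T2: "(3 * \<delta> * Q + lam) * P \<le> (1 + L) * (sqrt 2 * exp (- (L ^ 2)))"
  proof (rule mult_mono)
    have "3 * \<delta> * Q \<le> 3 * \<delta> * 1" using Qb d0 by (intro mult_left_mono) auto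
    then show "3 * \<delta> * Q + lam \<le> 1 + L"
      using d0 lam0 by linarith
  qed (use Pb Qb d0 lam0 L3 in auto)
  have XG: "X \<ge> G0 L" unfolding X_def G0_def using T1 T2 by simp
  have "L ^ 5 * L \<le> G0 L * Bl" using R1 unfolding Bl_def by (simp add: mult.assoc)
  also have "\<dots> \<le> X * Bl" using XG Bl0 by (intro mult_right_mono) auto
  also have "\<dots> \<le> X * B" using XG R2 Bl by (intro mult_left_mono) auto
  finally have BX: "L ^ 5 * L \<le> B * X" by (simp add: mult.commute)
  have "A * lam \<le> L ^ 5 * L"
    using A0 A1 nL lam0 by (intro mult_mono) auto
  then have "0 \<le> integral\<^sup>L (bandit_space 0 1) (gfun \<gamma> lam (tau_c sW n (lam + 2 * \<delta>)))"
    using V BX unfolding X_def by simp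
  then show ?thesis
    using index_ge[OF g tau_c_adm[OF n0]] unfolding lam_def by blast
qed



theorem lemma5:
  fixes sW :: real
  assumes "sW > 0"
  shows "\<exists>f :: real \<Rightarrow> real. (f \<longlongrightarrow> 0) (at_left 1) \<and>
           (\<forall>\<^sub>F \<gamma> in at_left 1.
              gittins_index 0 1 sW \<gamma> \<ge> sqrt (2 * ln (1 / (1 - \<gamma>))) + f \<gamma>)"
proof (intro exI conjI)
  define Lf where "Lf = (\<lambda>\<gamma>::real. sqrt (2 * ln (1 / (1 - \<gamma>))))"
  show "((\<lambda>g::real. - 1 / sqrt (sqrt (2 * ln (1 / (1 - g))))) \<longlongrightarrow> 0) (at_left 1)"
    by real_asymp
  have lim: "filterlim Lf at_top (at_left 1)" unfolding Lf_def by real_asymp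
  have R1: "eventually (\<lambda>L. G0 L * (1 - L ^ 5 * exp (- (L ^ 2) / 2)) * exp (L ^ 2 / 2) \<ge> L ^ 5 * L) at_top"
    unfolding G0_def by real_asymp
  have R2: "eventually (\<lambda>L. G0 L \<ge> 0) at_top"
    unfolding G0_def by real_asymp
  have R3: "eventually (\<lambda>L::real. L ^ 5 * exp (- (L ^ 2) / 2) \<le> 1) at_top"
    by real_asymp
  have ev: "eventually (\<lambda>L. L \<ge> 3 \<and> 4 * sW ^ 2 + 3 \<le> L \<and>
      G0 L * (1 - L ^ 5 * exp (- (L ^ 2) / 2)) * exp (L ^ 2 / 2) \<ge> L ^ 5 * L \<and>
      G0 L \<ge> 0 \<and> L ^ 5 * exp (- (L ^ 2) / 2) \<le> 1) at_top"
    by (intro eventually_conj R1 R2 R3 eventually_ge_at_top)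
  have ev2: "eventually (\<lambda>\<gamma>. Lf \<gamma> \<ge> 3 \<and> 4 * sW ^ 2 + 3 \<le> Lf \<gamma> \<and>
      G0 (Lf \<gamma>) * (1 - Lf \<gamma> ^ 5 * exp (- (Lf \<gamma> ^ 2) / 2)) * exp (Lf \<gamma> ^ 2 / 2) \<ge> Lf \<gamma> ^ 5 * Lf \<gamma> \<and>
      G0 (Lf \<gamma>) \<ge> 0 \<and> Lf \<gamma> ^ 5 * exp (- (Lf \<gamma> ^ 2) / 2) \<le> 1) (at_left 1)"
    using filterlim_iff[THEN iffD1, OF lim] ev by blast
  have ev3: "eventually (\<lambda>\<gamma>::real. \<gamma> \<in> {0<..<1}) (at_left 1)"
    by (rule eventually_at_left_real) simp
  show "\<forall>\<^sub>F \<gamma> in at_left 1. gittins_index 0 1 sW \<gamma> \<ge> sqrt (2 * ln (1 / (1 - \<gamma>))) + - 1 / sqrt (sqrt (2 * ln (1 / (1 - \<gamma>))))"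
    using ev2 ev3
  proof eventually_elim
    case (elim \<gamma>)
    then have g: "0 < \<gamma>" "\<gamma> < 1" by auto
    have ln0: "ln (1 / (1 - \<gamma>)) \<ge> 0" using g by (intro ln_ge_zero) (simp add: field_simps)
    have L2: "Lf \<gamma> ^ 2 = 2 * ln (1 / (1 - \<gamma>))" unfolding Lf_def using ln0 by simp
    have e: "1 - \<gamma> = exp (- (Lf \<gamma> ^ 2) / 2)"
    proof -
      have "- (Lf \<gamma> ^ 2) / 2 = ln (1 - \<gamma>)" unfolding L2 using g by (simp add: ln_div)
      then show ?thesis using g by simp
    qed
    have "gittins_index 0 1 sW \<gamma> \<ge> Lf \<gamma> - 1 / sqrt (Lf \<gamma>)"
      using key[OF assms g e] elim by blast
    then show ?case unfolding Lf_def by simp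
  qed
qed

end
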